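(* Let $R$ be a Noetherian ring, let $N\subsetneq M$ be finitely generated $R$-modules, and let $X\subseteq\operatorname{Ass}(M/N)$. Then the primary decompositions of $N$ in $M$ are independent over $X$ if and only if $X$ is an open subset of $\operatorname{Ass}(M/N)$, where $\operatorname{Ass}(M/N)$ carries the subspace topology induced from the Zariski topology on $\operatorname{Spec}(R)$.
   Context: A submodule $Q\subseteq M$ is $P$-primary if $\operatorname{Ass}(M/Q)=\{P\}$. A primary decomposition of $N$ in $M$ means an irredundant and minimal primary decomposition $N=Q_1\cap\cdots\cap Q_s$ with $Q_i$ being $P_i$-primary, the $P_i$ distinct, so $\operatorname{Ass}(M/N)=\{P_1,\dots,P_s\}$; $Q_i$ is called a $P_i$-primary component of $N$ in $M$, and $\Lambda_{P}(N\subsetneq M)$ is the set of all $P$-primary components of $N$ in $M$ (over all such decompositions). Writing $X=\{P_1,\dots,P_r\}$ with $\operatorname{Ass}(M/N)=\{P_1,\dots,P_s\}$, the primary decompositions of $N$ in $M$ are called independent over $X$ if for any two primary decompositions $N=Q_1\cap\cdots\cap Q_s=Q_1'\cap\cdots\cap Q_s'$ with $Q_i,Q_i'\in\Lambda_{P_i}(N\subsetneq M)$ for all $i$, one has $Q_1\cap\cdots\cap Q_r=Q_1'\cap\cdots\cap Q_r'$. *)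

theory Defs
  imports "HOL-Analysis.Analysis"
begin

definition is_ideal :: "'a::comm_ring_1 set \<Rightarrow> bool" where
  "is_ideal I \<longleftrightarrow> 0 \<in> I \<and> (\<forall>x\<in>I. \<forall>y\<in>I. x + y \<in> I) \<and> (\<forall>r. \<forall>x\<in>I. r * x \<in> I)"

definition prime_ideal :: "'a::comm_ring_1 set \<Rightarrow> bool" where
  "prime_ideal P \<longleftrightarrow> is_ideal P \<and> 1 \<notin> P \<and> (\<forall>a b. a * b \<in> P \<longrightarrow> a \<in> P \<or> b \<in> P)"

definition noetherian_ring :: "'a::comm_ring_1 itself \<Rightarrow> bool" where
  "noetherian_ring _ \<longleftrightarrow>
     (\<forall>I::'a set. is_ideal I \<longrightarrow> (\<exists>F. finite F \<and> I = module.span ((*)) F))"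

definition zariski_topology :: "'a::comm_ring_1 set topology" where
  "zariski_topology = topology (\<lambda>U. \<exists>S. U = {P. prime_ideal P \<and> \<not> S \<subseteq> P})"

text \<open>Ass(M/N): primes of the form Ann(x + N) = (N :_R x) with x in M.\<close>

definition ass :: "('a::comm_ring_1 \<Rightarrow> 'm::ab_group_add \<Rightarrow> 'm) \<Rightarrow> 'm set \<Rightarrow> 'm set \<Rightarrow> 'a set set" where
  "ass sc M N = {P. prime_ideal P \<and> (\<exists>x\<in>M. P = {r. sc r x \<in> N})}"

definition primary_submodule ::
  "('a::comm_ring_1 \<Rightarrow> 'm::ab_group_add \<Rightarrow> 'm) \<Rightarrow> 'm set \<Rightarrow> 'a set \<Rightarrow> 'm set \<Rightarrow> bool" where
  "primary_submodule sc M P Q \<longleftrightarrow>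
     module.subspace sc Q \<and> Q \<subseteq> M \<and> ass sc M Q = {P}"

text \<open>A (minimal, irredundant) primary decomposition of N in M, indexed by the
  associated primes of M/N: one P-primary component Q P for each P in Ass(M/N)
  (so the primes are distinct and there are exactly |Ass(M/N)| components).\<close>

definition primary_decomposition ::
  "('a::comm_ring_1 \<Rightarrow> 'm::ab_group_add \<Rightarrow> 'm) \<Rightarrow> 'm set \<Rightarrow> 'm set \<Rightarrow> ('a set \<Rightarrow> 'm set) \<Rightarrow> bool" where
  "primary_decomposition sc M N Q \<longleftrightarrow>
     (\<forall>P\<in>ass sc M N. primary_submodule sc M P (Q P)) \<and>
     M \<inter> \<Inter>(Q ` ass sc M N) = N"

definition independent_over ::
  "('a::comm_ring_1 \<Rightarrow> 'm::ab_group_add \<Rightarrow> 'm) \<Rightarrow> 'm set \<Rightarrow> 'm set \<Rightarrow> 'a set set \<Rightarrow> bool" where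
  "independent_over sc M N X \<longleftrightarrow>
     (\<forall>Q Q'. primary_decomposition sc M N Q \<and> primary_decomposition sc M N Q' \<longrightarrow>
        M \<inter> \<Inter>(Q ` X) = M \<inter> \<Inter>(Q' ` X))"

end

theory Submission
  imports Defs
begin

no_notation vector_scalar_mult (infixl "*s" 70)


lemma module_mult: "module ((*) :: 'a::comm_ring_1 \<Rightarrow> 'a \<Rightarrow> 'a)"
  by unfold_locales (simp_all add: algebra_simps)

lemma ideal_subspace: "is_ideal I \<Longrightarrow> module.subspace ((*)) I"
  unfolding module.subspace_def[OF module_mult] is_ideal_def by auto

lemma ideal_0: "is_ideal I \<Longrightarrow> 0 \<in> I" by (simp add: is_ideal_def)
lemma ideal_add: "is_ideal I \<Longrightarrow> x \<in> I \<Longrightarrow> y \<in> I \<Longrightarrow> x + y \<in> I" by (simp add: is_ideal_def)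
lemma ideal_mult_left: "is_ideal I \<Longrightarrow> x \<in> I \<Longrightarrow> r * x \<in> I" by (simp add: is_ideal_def)
lemma ideal_mult_right: "is_ideal I \<Longrightarrow> x \<in> I \<Longrightarrow> x * r \<in> I"
  by (metis ideal_mult_left mult.commute)
lemma ideal_neg: "is_ideal I \<Longrightarrow> x \<in> I \<Longrightarrow> - x \<in> I"
  by (metis ideal_mult_left mult_minus1)
lemma ideal_diff: "is_ideal I \<Longrightarrow> x \<in> I \<Longrightarrow> y \<in> I \<Longrightarrow> x - y \<in> I"
  by (metis ideal_add ideal_neg diff_conv_add_uminus)

lemma prime_is_ideal: "prime_ideal P \<Longrightarrow> is_ideal P" by (simp add: prime_ideal_def)
lemma prime_one: "prime_ideal P \<Longrightarrow> 1 \<notin> P" by (simp add: prime_ideal_def)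
lemma prime_mult: "prime_ideal P \<Longrightarrow> a * b \<in> P \<Longrightarrow> a \<in> P \<or> b \<in> P" by (simp add: prime_ideal_def)

lemma prime_prod_notin:
  assumes "prime_ideal P" "finite A" "\<forall>a\<in>A. f a \<notin> P"
  shows "prod f A \<notin> P"
  using assms(2,3)
proof (induction A rule: finite_induct)
  case empty then show ?case using assms(1) by (simp add: prime_one)
next
  case (insert x F) then show ?case using prime_mult[OF assms(1)] by auto
qed

lemma prime_pow_notin: "prime_ideal P \<Longrightarrow> s \<notin> P \<Longrightarrow> s ^ n \<notin> P"
  using prime_prod_notin[of P "{..<n}" "\<lambda>_. s"] by simp

lemma noeth_max:
  assumes "noetherian_ring TYPE('a::comm_ring_1)" "\<F> \<noteq> {}" "\<forall>I\<in>\<F>. is_ideal (I::'a set)"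
  shows "\<exists>I\<in>\<F>. \<forall>J\<in>\<F>. I \<subseteq> J \<longrightarrow> J = I"
proof (rule Zorn_Lemma2, rule ballI)
  fix C assume C: "C \<in> chains \<F>"
  show "\<exists>U\<in>\<F>. \<forall>X\<in>C. X \<subseteq> U"
  proof (cases "C = {}")
    case True then show ?thesis using assms(2) by auto
  next
    case False
    have CF: "C \<subseteq> \<F>" and ch: "chain\<^sub>\<subseteq> C" using C by (auto simp: chains_def)
    have sch: "subset.chain UNIV C" using ch by (simp add: chain_subset_alt_def)
    have id: "is_ideal (\<Union>C)"
      unfolding is_ideal_def
    proof (intro conjI ballI allI)
      show "0 \<in> \<Union>C" using False CF assms(3) by (auto simp: is_ideal_def)
    next
      fix x y assume "x \<in> \<Union>C" "y \<in> \<Union>C"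
      then obtain A B where AB: "A \<in> C" "B \<in> C" "x \<in> A" "y \<in> B" by auto
      then have "A \<subseteq> B \<or> B \<subseteq> A" using ch by (auto simp: chain_subset_def)
      then show "x + y \<in> \<Union>C"
      proof
        assume "A \<subseteq> B" then show ?thesis using AB CF assms(3) ideal_add[of B x y] by blast
      next
        assume "B \<subseteq> A" then show ?thesis using AB CF assms(3) ideal_add[of A x y] by blast
      qed
    next
      fix r x assume "x \<in> \<Union>C"
      then obtain X where "X \<in> C" "x \<in> X" by auto
      then show "r * x \<in> \<Union>C" using CF assms(3) ideal_mult_left[of X x r] by blast
    qed
    then obtain G where G: "finite G" "\<Union>C = module.span ((*)) G"
      using assms(1) unfolding noetherian_ring_def by blast
    have "G \<subseteq> \<Union>C" using G module.span_superset[OF module_mult] by blast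
    then obtain B where B: "B \<in> C" "G \<subseteq> B"
      using finite_subset_Union_chain[OF G(1) _ False sch] by blast
    have "module.span ((*)) G \<subseteq> B"
      using module.span_minimal[OF module_mult B(2) ideal_subspace] B CF assms(3) by blast
    then show ?thesis using B G CF by blast
  qed
qed






definition addl :: "('a::comm_ring_1 \<Rightarrow> 'b::ab_group_add \<Rightarrow> 'b) \<Rightarrow> 'b set \<Rightarrow> 'b \<Rightarrow> 'b set" where
  "addl sc K w = {k + sc t w | k t. k \<in> K}"

context module begin

lemma ann_ideal: "subspace Q \<Longrightarrow> is_ideal {r. r *s x \<in> Q}"
  unfolding is_ideal_def
  by (auto simp: subspace_0 subspace_add scale_left_distrib simp flip: scale_scale intro: subspace_scale)

lemma ass_self: "M \<subseteq> Q \<Longrightarrow> subspace Q \<Longrightarrow> ass scale M Q = {}"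
proof -
  assume a: "M \<subseteq> Q" "subspace Q"
  { fix P assume "P \<in> ass scale M Q"
    then obtain x where "prime_ideal P" "x \<in> M" "P = {r. r *s x \<in> Q}" unfolding ass_def by blast
    then have "1 \<in> P" using a by auto
    then have False using \<open>prime_ideal P\<close> prime_one by blast }
  then show ?thesis by blast
qed

lemma exists_prime_ann:
  assumes noeth: "noetherian_ring TYPE('a)" and Q: "subspace Q" and z: "z \<notin> Q"
  shows "\<exists>r. r *s z \<notin> Q \<and> prime_ideal {s. s *s (r *s z) \<in> Q}"
proof -
  define \<F> where "\<F> = {{s. s *s (r *s z) \<in> Q} | r. r *s z \<notin> Q}"
  have ne: "\<F> \<noteq> {}" using z unfolding \<F>_def by (auto intro!: exI[of _ 1])
  have id: "\<forall>I\<in>\<F>. is_ideal I" unfolding \<F>_def using ann_ideal[OF Q] by blast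
  obtain I where I: "I \<in> \<F>" "\<forall>J\<in>\<F>. I \<subseteq> J \<longrightarrow> J = I" using noeth_max[OF noeth ne id] by blast
  then obtain r0 where r0: "I = {s. s *s (r0 *s z) \<in> Q}" "r0 *s z \<notin> Q" unfolding \<F>_def by blast
  have "prime_ideal I"
    unfolding prime_ideal_def
  proof (intro conjI allI impI)
    show "is_ideal I" using id I by blast
    show "1 \<notin> I" using r0 by simp
  next
    fix a b assume ab: "a * b \<in> I"
    show "a \<in> I \<or> b \<in> I"
    proof (cases "a \<in> I")
      case True then show ?thesis by blast
    next
      case False
      assume "a \<notin> I"
      then have na: "(a * r0) *s z \<notin> Q" using r0 by (simp add: scale_scale)
      then have J: "{s. s *s ((a * r0) *s z) \<in> Q} \<in> \<F>" unfolding \<F>_def by blast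
      have "I \<subseteq> {s. s *s ((a * r0) *s z) \<in> Q}"
      proof
        fix s assume "s \<in> I"
        then have "s *s (r0 *s z) \<in> Q" using r0 by simp
        then have "a *s (s *s (r0 *s z)) \<in> Q" using Q subspace_scale by blast
        then show "s \<in> {s. s *s ((a * r0) *s z) \<in> Q}" by (simp add: scale_scale algebra_simps)
      qed
      then have eq: "{s. s *s ((a * r0) *s z) \<in> Q} = I" using I J by blast
      have "(a * b) *s (r0 *s z) \<in> Q" using ab r0 by simp
      then have "b \<in> {s. s *s ((a * r0) *s z) \<in> Q}" by (simp add: scale_scale algebra_simps)
      then show ?thesis using eq by blast
    qed
  qed
  then show ?thesis using r0 by blast
qed

lemma exists_ass:
  assumes noeth: "noetherian_ring TYPE('a)" and M: "subspace M" and Q: "subspace Q"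
    and z: "z \<in> M" "z \<notin> Q"
  shows "\<exists>P\<in>ass scale M Q. {s. s *s z \<in> Q} \<subseteq> P"
proof -
  obtain r where r: "r *s z \<notin> Q" "prime_ideal {s. s *s (r *s z) \<in> Q}"
    using exists_prime_ann[OF noeth Q z(2)] by blast
  have "r *s z \<in> M" using M z subspace_scale by blast
  then have "{s. s *s (r *s z) \<in> Q} \<in> ass scale M Q" using r unfolding ass_def by blast
  moreover have "{s. s *s z \<in> Q} \<subseteq> {s. s *s (r *s z) \<in> Q}"
  proof
    fix s assume "s \<in> {s. s *s z \<in> Q}"
    then have "r *s (s *s z) \<in> Q" using Q subspace_scale by blast
    then show "s \<in> {s. s *s (r *s z) \<in> Q}" by (simp add: scale_scale mult.commute)
  qed
  ultimately show ?thesis by blast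
qed

lemma zero_div:
  assumes noeth: "noetherian_ring TYPE('a)" and "ass scale M Q = {P}" "subspace M" "subspace Q"
    "x \<in> M" "x \<notin> Q" "s *s x \<in> Q"
  shows "s \<in> P"
  using exists_ass[OF noeth assms(3,4,5,6)] assms(2,7) by blast

lemma ass_L1:
  assumes "N \<subseteq> Q"
  shows "ass scale K N \<subseteq> ass scale Q N \<union> ass scale K Q"
proof
  fix P assume "P \<in> ass scale K N"
  then obtain x where P: "prime_ideal P" "x \<in> K" "P = {r. r *s x \<in> N}" unfolding ass_def by blast
  show "P \<in> ass scale Q N \<union> ass scale K Q"
  proof (cases "x \<in> Q")
    case True then show ?thesis using P unfolding ass_def by blast
  next
    case False
    show ?thesis
    proof (cases "{r. r *s x \<in> Q} = P")
      case True then show ?thesis using P unfolding ass_def by blast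
    next
      case False
      have "P \<subseteq> {r. r *s x \<in> Q}" using P assms by blast
      with False obtain r where r: "r *s x \<in> Q" "r \<notin> P" by blast
      have "{s. s *s (r *s x) \<in> N} = P"
      proof (intro set_eqI iffI)
        fix s assume "s \<in> {s. s *s (r *s x) \<in> N}"
        then have "s * r \<in> P" using P by (simp add: scale_scale)
        then show "s \<in> P" using prime_mult[OF P(1)] r by blast
      next
        fix s assume "s \<in> P"
        then have "s * r \<in> P" using ideal_mult_right[OF prime_is_ideal[OF P(1)]] by blast
        then show "s \<in> {s. s *s (r *s x) \<in> N}" using P by (simp add: scale_scale)
      qed
      then show ?thesis using P r unfolding ass_def by blast
    qed
  qed
qed


lemma addl_subspace: "subspace K \<Longrightarrow> subspace (addl scale K w)"
  unfolding subspace_def addl_def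
proof (intro conjI ballI allI)
  assume K: "0 \<in> K \<and> (\<forall>x\<in>K. \<forall>y\<in>K. x + y \<in> K) \<and> (\<forall>c. \<forall>x\<in>K. c *s x \<in> K)"
  show "0 \<in> {k + t *s w |k t. k \<in> K}" using K by (auto intro!: exI[of _ 0])
  fix x y assume "x \<in> {k + t *s w |k t. k \<in> K}" "y \<in> {k + t *s w |k t. k \<in> K}"
  then obtain k1 t1 k2 t2 where "x = k1 + t1 *s w" "y = k2 + t2 *s w" "k1 \<in> K" "k2 \<in> K" by blast
  then show "x + y \<in> {k + t *s w |k t. k \<in> K}" using K
    by (auto intro!: exI[of _ "k1 + k2"] exI[of _ "t1 + t2"] simp: algebra_simps)
next
  fix c x
  assume K: "0 \<in> K \<and> (\<forall>x\<in>K. \<forall>y\<in>K. x + y \<in> K) \<and> (\<forall>c. \<forall>x\<in>K. c *s x \<in> K)"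
    and "x \<in> {k + t *s w |k t. k \<in> K}"
  then obtain k1 t1 where "x = k1 + t1 *s w" "k1 \<in> K" by blast
  then show "c *s x \<in> {k + t *s w |k t. k \<in> K}" using K
    by (auto intro!: exI[of _ "c *s k1"] exI[of _ "c * t1"] simp: algebra_simps scale_scale)
qed

lemma addl_sup: "subspace K \<Longrightarrow> K \<subseteq> addl scale K w"
  unfolding addl_def by (force intro: exI[of _ 0])

lemma addl_w: "subspace K \<Longrightarrow> w \<in> addl scale K w"
  unfolding addl_def using subspace_0 by (force intro!: exI[of _ 0] exI[of _ 1])

lemma addl_sub: "subspace M \<Longrightarrow> K \<subseteq> M \<Longrightarrow> w \<in> M \<Longrightarrow> addl scale K w \<subseteq> M"
  unfolding addl_def using subspace_add subspace_scale by blast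

lemma ass_L2:
  assumes Q: "subspace Q" and P: "prime_ideal {s. s *s w \<in> Q}"
  shows "ass scale (addl scale Q w) Q \<subseteq> {{s. s *s w \<in> Q}}"
proof
  fix R assume "R \<in> ass scale (addl scale Q w) Q"
  then obtain x where R: "prime_ideal R" "x \<in> addl scale Q w" "R = {r. r *s x \<in> Q}" unfolding ass_def by blast
  then obtain k t where x: "x = k + t *s w" "k \<in> Q" unfolding addl_def by blast
  have key: "s *s x \<in> Q \<longleftrightarrow> (s * t) *s w \<in> Q" for s
  proof -
    have "s *s x = s *s k + (s * t) *s w" using x by (simp add: scale_right_distrib scale_scale)
    moreover have "s *s k \<in> Q" using Q x subspace_scale by blast
    ultimately show ?thesis
      by (metis Q add_diff_cancel_left' subspace_add subspace_diff)
  qed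
  have t: "t \<notin> {s. s *s w \<in> Q}"
  proof
    assume "t \<in> {s. s *s w \<in> Q}"
    then have "1 \<in> R" using R key by simp
    then show False using R prime_one by blast
  qed
  have "R = {s. s *s w \<in> Q}"
  proof (intro set_eqI iffI)
    fix s assume "s \<in> R"
    then have "s * t \<in> {s. s *s w \<in> Q}" using R key by simp
    then show "s \<in> {s. s *s w \<in> Q}" using prime_mult[OF P] t by blast
  next
    fix s assume "s \<in> {s. s *s w \<in> Q}"
    then have "s * t \<in> {s. s *s w \<in> Q}" using ideal_mult_right[OF prime_is_ideal[OF P]] by blast
    then show "s \<in> R" using R key by simp
  qed
  then show "R \<in> {{s. s *s w \<in> Q}}" by simp
qed

end





context module begin

lemma noeth_mod_max:
  assumes noeth: "noetherian_ring TYPE('a)" and fin: "finite F"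
  shows "\<K> \<noteq> {} \<Longrightarrow> \<forall>K\<in>\<K>. subspace K \<and> K \<subseteq> span F \<Longrightarrow> \<exists>K\<in>\<K>. \<forall>K'\<in>\<K>. K \<subseteq> K' \<longrightarrow> K' = K"
  using fin
proof (induction F arbitrary: \<K> rule: finite_induct)
  case empty
  have "\<forall>K\<in>\<K>. K = {0}" using empty.prems(2) subspace_0 by auto
  then show ?case using empty.prems(1) by auto
next
  case (insert f F)
  define Iof where "Iof K = {r. \<exists>u\<in>span F. r *s f + u \<in> K}" for K
  have Iid: "is_ideal (Iof K)" if "subspace K" for K
    unfolding is_ideal_def Iof_def
  proof (intro conjI ballI allI)
    show "0 \<in> {r. \<exists>u\<in>span F. r *s f + u \<in> K}" using that span_zero subspace_0 by fastforce
  next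
    fix x y assume "x \<in> {r. \<exists>u\<in>span F. r *s f + u \<in> K}" "y \<in> {r. \<exists>u\<in>span F. r *s f + u \<in> K}"
    then obtain u1 u2 where u: "u1 \<in> span F" "u2 \<in> span F" "x *s f + u1 \<in> K" "y *s f + u2 \<in> K" by blast
    have e: "(x *s f + u1) + (y *s f + u2) = (x + y) *s f + (u1 + u2)" by (simp add: algebra_simps)
    have "(x + y) *s f + (u1 + u2) \<in> K" using subspace_add[OF that u(3,4)] unfolding e .
    moreover have "u1 + u2 \<in> span F" using span_add[OF u(1,2)] .
    ultimately show "x + y \<in> {r. \<exists>u\<in>span F. r *s f + u \<in> K}" by blast
  next
    fix r x assume "x \<in> {r. \<exists>u\<in>span F. r *s f + u \<in> K}"
    then obtain u1 where u: "u1 \<in> span F" "x *s f + u1 \<in> K" by blast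
    have e: "r *s (x *s f + u1) = (r * x) *s f + r *s u1" by (simp add: algebra_simps scale_scale)
    have "(r * x) *s f + r *s u1 \<in> K" using subspace_scale[OF that u(2), of r] unfolding e .
    moreover have "r *s u1 \<in> span F" using span_scale[OF u(1)] .
    ultimately show "r * x \<in> {r. \<exists>u\<in>span F. r *s f + u \<in> K}" by blast
  qed
  have Imono: "K \<subseteq> K' \<Longrightarrow> Iof K \<subseteq> Iof K'" for K K' unfolding Iof_def by blast
  have ids: "\<forall>I\<in>Iof ` \<K>. is_ideal I" using insert.prems(2) Iid by auto
  have nei: "Iof ` \<K> \<noteq> {}" using insert.prems(1) by simp
  obtain I0 where I0: "I0 \<in> Iof ` \<K>" "\<forall>J\<in>Iof ` \<K>. I0 \<subseteq> J \<longrightarrow> J = I0"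
    using noeth_max[OF noeth nei ids] by blast
  define \<K>0 where "\<K>0 = {K\<in>\<K>. Iof K = I0}"
  have ne0: "(\<lambda>K. K \<inter> span F) ` \<K>0 \<noteq> {}" using I0 unfolding \<K>0_def by blast
  have sub0: "\<forall>K\<in>(\<lambda>K. K \<inter> span F) ` \<K>0. subspace K \<and> K \<subseteq> span F"
    unfolding \<K>0_def using insert.prems(2) subspace_inter[OF _ subspace_span] by auto
  obtain K1 where K1: "K1 \<in> \<K>0" "\<forall>K'\<in>\<K>0. K1 \<inter> span F \<subseteq> K' \<inter> span F \<longrightarrow> K' \<inter> span F = K1 \<inter> span F"
    using insert.IH[OF ne0 sub0] by blast
  show ?case
  proof (intro bexI[of _ K1] ballI impI)
    show "K1 \<in> \<K>" using K1 unfolding \<K>0_def by blast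
    fix K' assume K': "K' \<in> \<K>" "K1 \<subseteq> K'"
    have "Iof K1 \<subseteq> Iof K'" using Imono K' by blast
    moreover have "Iof K1 = I0" using K1(1) unfolding \<K>0_def by blast
    moreover have "Iof K' \<in> Iof ` \<K>" using K'(1) by blast
    ultimately have IK': "Iof K' = I0" using I0(2) by metis
    then have "K' \<in> \<K>0" using K' unfolding \<K>0_def by blast
    then have eqi: "K' \<inter> span F = K1 \<inter> span F" using K1 K' by blast
    have sK': "subspace K'" "K' \<subseteq> span (insert f F)" using insert.prems(2) K' by auto
    show "K' = K1"
    proof
      show "K' \<subseteq> K1"
      proof
        fix x assume x: "x \<in> K'"
        then obtain k where k: "x - k *s f \<in> span F" using sK' span_insert by blast
        define u where "u = x - k *s f"
        have "k *s f + u \<in> K'" using x u_def by simp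
        then have "k \<in> Iof K'" using k u_def Iof_def by blast
        moreover have "Iof K1 = I0" using K1(1) unfolding \<K>0_def by blast
        ultimately have "k \<in> Iof K1" using IK' by simp
        then obtain u' where u': "u' \<in> span F" "k *s f + u' \<in> K1" unfolding Iof_def by blast
        have h1: "u - u' \<in> span F" using k u' u_def span_diff by blast
        have h3: "u - u' = x - (k *s f + u')" using u_def by (simp add: algebra_simps)
        have h2: "x - (k *s f + u') \<in> K'" using subspace_diff[OF sK'(1) x] u' K' by blast
        have "u - u' \<in> K' \<inter> span F" using h1 h2 h3 by (metis IntI)
        then have "u - u' \<in> K1" using eqi by blast
        moreover have "x = (k *s f + u') + (u - u')" using u_def by (simp add: algebra_simps)
        moreover have "subspace K1" using K1 insert.prems(2) unfolding \<K>0_def by blast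
        ultimately show "x \<in> K1" using u'(2) subspace_add[of K1 "k *s f + u'" "u - u'"] by metis
      qed
    qed (use K' in blast)
  qed
qed

lemma bourbaki:
  assumes M: "subspace M" and K: "subspace K" "B \<subseteq> K" "K \<subseteq> M" "P \<notin> ass scale K B"
    and max: "\<forall>K'. subspace K' \<and> B \<subseteq> K' \<and> K' \<subseteq> M \<and> P \<notin> ass scale K' B \<and> K \<subseteq> K' \<longrightarrow> K' = K"
  shows "ass scale M K \<subseteq> {P}"
proof
  fix R assume "R \<in> ass scale M K"
  then obtain z where R: "prime_ideal R" "z \<in> M" "R = {r. r *s z \<in> K}" unfolding ass_def by blast
  have "z \<notin> K" using R prime_one by fastforce
  define K' where "K' = addl scale K z"
  have K'p: "subspace K'" "B \<subseteq> K'" "K' \<subseteq> M" "K \<subseteq> K'" "z \<in> K'"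
    unfolding K'_def
    using addl_subspace[OF K(1), of z] addl_sup[OF K(1), of z] addl_sub[OF M K(3) R(2)] addl_w[OF K(1), of z] K(2)
    by auto
  have "K' \<noteq> K" using K'p \<open>z \<notin> K\<close> by blast
  then have "P \<in> ass scale K' B" using max K'p by blast
  then have "P \<in> ass scale K' K" using ass_L1[OF K(2), of K'] K(4) by blast
  then show "R \<in> {P}" using ass_L2[OF K(1), of z] R unfolding K'_def by auto
qed

lemma ass_finite:
  assumes noeth: "noetherian_ring TYPE('a)" and fin: "finite F" and M: "M = span F"
    and N: "subspace N" "N \<subseteq> M"
  shows "finite (ass scale M N)"
proof -
  define \<K> where "\<K> = {K. subspace K \<and> N \<subseteq> K \<and> K \<subseteq> M \<and> finite (ass scale K N)}"
  have "N \<in> \<K>" unfolding \<K>_def using N ass_self[of N N] by auto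
  then obtain K0 where K0: "K0 \<in> \<K>" "\<forall>K'\<in>\<K>. K0 \<subseteq> K' \<longrightarrow> K' = K0"
    using noeth_mod_max[OF noeth fin, of \<K>] M unfolding \<K>_def by blast
  have sK0: "subspace K0" "N \<subseteq> K0" "K0 \<subseteq> M" "finite (ass scale K0 N)" using K0 unfolding \<K>_def by auto
  have "K0 = M"
  proof (rule ccontr)
    assume "K0 \<noteq> M"
    then obtain z where z: "z \<in> M" "z \<notin> K0" using sK0 by blast
    obtain r where r: "r *s z \<notin> K0" "prime_ideal {s. s *s (r *s z) \<in> K0}"
      using exists_prime_ann[OF noeth sK0(1) z(2)] by blast
    define w where "w = r *s z"
    have wM: "w \<in> M" using z M w_def subspace_scale subspace_span by blast
    define K' where "K' = addl scale K0 w"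
    have K'p: "subspace K'" "N \<subseteq> K'" "K' \<subseteq> M" "K0 \<subseteq> K'" "w \<in> K'"
      unfolding K'_def
      using addl_subspace[OF sK0(1), of w] addl_sup[OF sK0(1), of w] addl_sub[OF _ sK0(3) wM] addl_w[OF sK0(1), of w] sK0(2) M
      by auto
    have "ass scale K' N \<subseteq> ass scale K0 N \<union> {{s. s *s w \<in> K0}}"
      using ass_L1[OF sK0(2), of K'] ass_L2[OF sK0(1), of w] r unfolding K'_def w_def by blast
    then have "finite (ass scale K' N)" using sK0(4) finite_subset by blast
    then have "K' \<in> \<K>" using K'p unfolding \<K>_def by blast
    then have "K' = K0" using K0 K'p by blast
    then show False using K'p r w_def by blast
  qed
  then show ?thesis using sK0 by simp
qed

lemma primdec_exists:
  assumes noeth: "noetherian_ring TYPE('a)" and fin: "finite F" and M: "M = span F"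
    and N: "subspace N" "N \<subseteq> M"
  shows "\<exists>Q. primary_decomposition scale M N Q"
proof -
  have sM: "subspace M" using M by simp
  define \<K> where "\<K> P = {K. subspace K \<and> N \<subseteq> K \<and> K \<subseteq> M \<and> P \<notin> ass scale K N}" for P
  have "\<exists>K\<in>\<K> P. \<forall>K'\<in>\<K> P. K \<subseteq> K' \<longrightarrow> K' = K" for P
  proof -
    have "N \<in> \<K> P" unfolding \<K>_def using N ass_self[of N N] by auto
    then show ?thesis using noeth_mod_max[OF noeth fin, of "\<K> P"] M unfolding \<K>_def by blast
  qed
  then obtain Qf where Qf: "\<And>P. Qf P \<in> \<K> P" "\<And>P. \<forall>K'\<in>\<K> P. Qf P \<subseteq> K' \<longrightarrow> K' = Qf P" by metis
  have Qp: "subspace (Qf P)" "N \<subseteq> Qf P" "Qf P \<subseteq> M" "P \<notin> ass scale (Qf P) N" for P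
    using Qf(1)[of P] unfolding \<K>_def by auto
  have prim: "primary_submodule scale M P (Qf P)" if P: "P \<in> ass scale M N" for P
  proof -
    have "ass scale M (Qf P) \<subseteq> {P}"
      using bourbaki[OF sM Qp(1,2,3,4), of P] Qf(2)[of P] unfolding \<K>_def by blast
    moreover have "P \<in> ass scale M (Qf P)" using ass_L1[OF Qp(2), of M] P Qp(4) by blast
    ultimately show ?thesis unfolding primary_submodule_def using Qp by blast
  qed
  define D where "D = M \<inter> \<Inter>(Qf ` ass scale M N)"
  have sD: "subspace D" unfolding D_def using sM Qp(1)
    by (intro subspace_inter subspace_Inter) auto
  have "D = N"
  proof
    show "N \<subseteq> D" unfolding D_def using N Qp(2) by blast
    show "D \<subseteq> N"
    proof (rule ccontr)
      assume "\<not> D \<subseteq> N"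
      then obtain z where z: "z \<in> D" "z \<notin> N" by blast
      obtain P where P: "P \<in> ass scale D N" using exists_ass[OF noeth sD N(1) z] by blast
      then obtain w where w: "prime_ideal P" "w \<in> D" "P = {r. r *s w \<in> N}" unfolding ass_def by blast
      have "P \<in> ass scale M N" using w unfolding ass_def D_def by blast
      then have "w \<in> Qf P" using w unfolding D_def by blast
      then have "P \<in> ass scale (Qf P) N" using w unfolding ass_def by blast
      then show False using Qp(4) by blast
    qed
  qed
  then show ?thesis unfolding primary_decomposition_def D_def using prim by blast
qed

lemma nilp:
  assumes noeth: "noetherian_ring TYPE('a)" and M: "subspace M" and Q: "subspace Q"
    and A: "ass scale M Q = {P}" and p: "p \<in> P" and x: "x \<in> M"
  shows "\<exists>n. (p ^ n) *s x \<in> Q"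
proof (rule ccontr)
  assume nn: "\<not> (\<exists>n. (p ^ n) *s x \<in> Q)"
  define J where "J k = {r. r *s ((p ^ k) *s x) \<in> Q}" for k
  have Jid: "is_ideal (J k)" for k unfolding J_def by (rule ann_ideal[OF Q])
  have ne: "range J \<noteq> {}" by simp
  have ids: "\<forall>I\<in>range J. is_ideal I" using Jid by simp
  obtain I where I: "I \<in> range J" "\<forall>I'\<in>range J. I \<subseteq> I' \<longrightarrow> I' = I"
    using noeth_max[OF noeth ne ids] by blast
  then obtain n where n: "I = J n" by blast
  have stepeq: "r *s ((p ^ Suc n) *s x) = p *s (r *s ((p ^ n) *s x))" for r
    by (simp add: scale_scale ac_simps)
  have "J n \<subseteq> J (Suc n)"
  proof
    fix r assume "r \<in> J n"
    then have "r *s ((p ^ n) *s x) \<in> Q" unfolding J_def by simp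
    then have "p *s (r *s ((p ^ n) *s x)) \<in> Q" using Q subspace_scale by blast
    then show "r \<in> J (Suc n)" unfolding J_def using stepeq by simp
  qed
  moreover have "J (Suc n) \<in> range J" by simp
  ultimately have Jeq: "J (Suc n) = J n" using I(2) n by metis
  define z where "z = (p ^ n) *s x"
  have "z \<notin> Q" using nn z_def by blast
  then obtain r where r: "r *s z \<notin> Q" "prime_ideal {s. s *s (r *s z) \<in> Q}"
    using exists_prime_ann[OF noeth Q] by blast
  have "r *s z \<in> M" using M x subspace_scale z_def by blast
  then have "{s. s *s (r *s z) \<in> Q} \<in> ass scale M Q" unfolding ass_def using r(2) by blast
  then have "{s. s *s (r *s z) \<in> Q} = P" using A by simp
  then have "p *s (r *s z) \<in> Q" using p by blast
  then have "r \<in> J (Suc n)" unfolding J_def z_def using stepeq by simp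
  then have "r \<in> J n" using Jeq by simp
  then show False using r(1) unfolding J_def z_def by simp
qed

lemma ass_inter:
  assumes A: "subspace A" and B: "subspace B"
  shows "ass scale M (A \<inter> B) \<subseteq> ass scale M A \<union> ass scale M B"
proof
  fix P assume "P \<in> ass scale M (A \<inter> B)"
  then obtain x where P: "prime_ideal P" "x \<in> M" "P = {r. r *s x \<in> A \<inter> B}" unfolding ass_def by blast
  let ?a = "{r. r *s x \<in> A}" and ?b = "{r. r *s x \<in> B}"
  have Pab: "P = ?a \<inter> ?b" using P by auto
  have "?a = P \<or> ?b = P"
  proof (cases "?a \<subseteq> P")
    case True then show ?thesis using Pab by blast
  next
    case False
    then obtain a where a: "a \<in> ?a" "a \<notin> P" by blast
    have "?b \<subseteq> P"
    proof
      fix b assume b: "b \<in> ?b"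
      have "a * b \<in> ?a" using ideal_mult_right[OF ann_ideal[OF A] a(1)] by blast
      moreover have "a * b \<in> ?b" using ideal_mult_left[OF ann_ideal[OF B] b] by blast
      ultimately have "a * b \<in> P" using Pab by blast
      then show "b \<in> P" using prime_mult[OF P(1)] a(2) by blast
    qed
    then show ?thesis using Pab by blast
  qed
  then show "P \<in> ass scale M A \<union> ass scale M B" using P unfolding ass_def by blast
qed

lemma ass_Inter:
  assumes M: "subspace M" and fin: "finite S" and sub: "\<forall>R\<in>S. subspace (Q R)"
  shows "ass scale M (M \<inter> \<Inter>(Q ` S)) \<subseteq> (\<Union>R\<in>S. ass scale M (Q R))"
  using fin sub
proof (induction S rule: finite_induct)
  case empty then show ?case using ass_self[of M M] M by simp
next
  case (insert a S)
  have eq: "M \<inter> \<Inter>(Q ` insert a S) = Q a \<inter> (M \<inter> \<Inter>(Q ` S))" by auto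
  have "subspace (M \<inter> \<Inter>(Q ` S))" using M insert.prems by (intro subspace_inter subspace_Inter) auto
  then have "ass scale M (M \<inter> \<Inter>(Q ` insert a S)) \<subseteq> ass scale M (Q a) \<union> ass scale M (M \<inter> \<Inter>(Q ` S))"
    unfolding eq using ass_inter insert.prems by blast
  then show ?case using insert by auto
qed

lemma primary_avoiding:
  assumes noeth: "noetherian_ring TYPE('a)" and fin: "finite F" and M: "M = span F"
    and N: "subspace N" "N \<subseteq> M" and y: "y \<in> M" and P: "prime_ideal P"
    and yP: "{s. s *s y \<in> N} \<subseteq> P"
  shows "\<exists>K. subspace K \<and> N \<subseteq> K \<and> K \<subseteq> M \<and> ass scale M K = {P} \<and> y \<notin> K"
proof -
  have sM: "subspace M" using M by simp
  define \<K> where "\<K> = {B. subspace B \<and> N \<subseteq> B \<and> B \<subseteq> M \<and> {s. s *s y \<in> B} \<subseteq> P}"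
  have "N \<in> \<K>" unfolding \<K>_def using N yP by blast
  then obtain B where B: "B \<in> \<K>" "\<forall>K'\<in>\<K>. B \<subseteq> K' \<longrightarrow> K' = B"
    using noeth_mod_max[OF noeth fin, of \<K>] M unfolding \<K>_def by blast
  have sB: "subspace B" "N \<subseteq> B" "B \<subseteq> M" "{s. s *s y \<in> B} \<subseteq> P" using B unfolding \<K>_def by auto
  have annB: "{s. s *s y \<in> B} = P"
  proof
    show "P \<subseteq> {s. s *s y \<in> B}"
    proof
      fix p assume p: "p \<in> P"
      show "p \<in> {s. s *s y \<in> B}"
      proof (rule ccontr)
        assume np: "p \<notin> {s. s *s y \<in> B}"
        define B' where "B' = addl scale B (p *s y)"
        have pyM: "p *s y \<in> M" using sM y subspace_scale by blast
        have B'p: "subspace B'" "N \<subseteq> B'" "B' \<subseteq> M" "B \<subseteq> B'" "p *s y \<in> B'"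
          unfolding B'_def
          using addl_subspace[OF sB(1), of "p *s y"] addl_sup[OF sB(1), of "p *s y"] addl_sub[OF sM sB(3) pyM] addl_w[OF sB(1), of "p *s y"] sB(2)
          by auto
        have "{s. s *s y \<in> B'} \<subseteq> P"
        proof
          fix s assume "s \<in> {s. s *s y \<in> B'}"
          then obtain b t where bt: "s *s y = b + t *s (p *s y)" "b \<in> B" unfolding B'_def addl_def by blast
          have "(s - t * p) *s y = b" using bt by (simp add: algebra_simps scale_scale)
          then have "s - t * p \<in> P" using sB(4) bt by auto
          moreover have "t * p \<in> P" using ideal_mult_left[OF prime_is_ideal[OF P] p] by blast
          ultimately have "(s - t * p) + t * p \<in> P" using ideal_add[OF prime_is_ideal[OF P]] by blast
          then show "s \<in> P" by simp
        qed
        then have "B' \<in> \<K>" unfolding \<K>_def using B'p by blast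
        then have "B' = B" using B B'p by blast
        then show False using np B'p by blast
      qed
    qed
  qed (use sB in blast)
  define \<K>2 where "\<K>2 = {K. subspace K \<and> B \<subseteq> K \<and> K \<subseteq> M \<and> P \<notin> ass scale K B}"
  have "B \<in> \<K>2" unfolding \<K>2_def using sB ass_self[of B B] by auto
  then obtain K where K: "K \<in> \<K>2" "\<forall>K'\<in>\<K>2. K \<subseteq> K' \<longrightarrow> K' = K"
    using noeth_mod_max[OF noeth fin, of \<K>2] M unfolding \<K>2_def by blast
  have sK: "subspace K" "B \<subseteq> K" "K \<subseteq> M" "P \<notin> ass scale K B" using K unfolding \<K>2_def by auto
  have sub: "ass scale M K \<subseteq> {P}" using bourbaki[OF sM sK] K unfolding \<K>2_def by blast
  have yK: "y \<notin> K"
  proof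
    assume "y \<in> K"
    then have "P \<in> ass scale K B" using annB P unfolding ass_def by blast
    then show False using sK by blast
  qed
  obtain R where "R \<in> ass scale M K" using exists_ass[OF noeth sM sK(1) y yK] by blast
  then have "ass scale M K = {P}" using sub by blast
  then show ?thesis using sK yK sB by blast
qed

end



lemma prime_prod_in:
  assumes "prime_ideal P" "finite A" "prod f A \<in> P"
  shows "\<exists>a\<in>A. f a \<in> P"
  using prime_prod_notin[OF assms(1,2), of f] assms(3) by blast

lemma ideal_prod_in:
  assumes "is_ideal I" "finite A" "a \<in> A" "f a \<in> I"
  shows "prod f A \<in> I"
proof -
  have "prod f A = f a * prod f (A - {a})" using prod.remove[OF assms(2,3)] by simp
  then show ?thesis using ideal_mult_right[OF assms(1,4)] by simp
qed

lemma prime_avoid: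
  "finite \<P> \<Longrightarrow> \<forall>P\<in>\<P>. prime_ideal P \<Longrightarrow> is_ideal I \<Longrightarrow> I \<subseteq> \<Union>\<P> \<Longrightarrow> \<exists>P\<in>\<P>. I \<subseteq> P"
proof (induction \<P> rule: finite_psubset_induct)
  case (psubset \<P>)
  show ?case
  proof (cases "\<exists>P0\<in>\<P>. I \<subseteq> \<Union>(\<P> - {P0})")
    case True
    then obtain P0 where P0: "P0 \<in> \<P>" "I \<subseteq> \<Union>(\<P> - {P0})" by blast
    have "\<P> - {P0} \<subset> \<P>" using P0 by blast
    moreover have "\<forall>P\<in>\<P> - {P0}. prime_ideal P" using psubset.prems(1) by blast
    ultimately have "\<exists>P\<in>\<P> - {P0}. I \<subseteq> P" using psubset.IH[of "\<P> - {P0}"] psubset.prems(2) P0(2) by blast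
    then show ?thesis by blast
  next
    case False
    then have "\<forall>P\<in>\<P>. \<exists>x. x \<in> I \<and> x \<notin> \<Union>(\<P> - {P})" by blast
    from bchoice[OF this] obtain x where x: "\<forall>P\<in>\<P>. x P \<in> I \<and> x P \<notin> \<Union>(\<P> - {P})" by blast
    have "0 \<in> I" using psubset.prems(2) ideal_0 by blast
    then obtain P0 where P0: "P0 \<in> \<P>" using psubset.prems(3) by blast
    have xin: "x P \<in> P" if "P \<in> \<P>" for P
    proof -
      have "x P \<in> \<Union>\<P>" using x that psubset.prems(3) by blast
      then obtain Q where Q: "Q \<in> \<P>" "x P \<in> Q" by blast
      show ?thesis
      proof (cases "Q = P")
        case True then show ?thesis using Q by simp
      next
        case False
        then have "x P \<in> \<Union>(\<P> - {P})" using Q by blast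
        then show ?thesis using x that by blast
      qed
    qed
    show ?thesis
    proof (cases "\<P> - {P0} = {}")
      case True
      then have "\<P> = {P0}" using P0 by blast
      then show ?thesis using psubset.prems(3) by auto
    next
      case False
      then obtain P2 where P2: "P2 \<in> \<P> - {P0}" by blast
      define pr where "pr = prod x (\<P> - {P0})"
      have fin: "finite (\<P> - {P0})" using psubset.hyps by simp
      have prI: "pr \<in> I" unfolding pr_def using ideal_prod_in[OF psubset.prems(2) fin P2] x P2 by blast
      define y where "y = x P0 + pr"
      have "y \<in> I" unfolding y_def using ideal_add[OF psubset.prems(2)] x P0 prI by blast
      then obtain P1 where P1: "P1 \<in> \<P>" "y \<in> P1" using psubset.prems(3) by blast
      have pP1: "prime_ideal P1" using P1 psubset.prems(1) by blast
      show ?thesis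
      proof (cases "P1 = P0")
        case True
        have "pr = y - x P0" unfolding y_def by simp
        then have "pr \<in> P0" using ideal_diff[OF prime_is_ideal[OF pP1]] P1 xin[OF P0] True by simp
        then obtain P where P: "P \<in> \<P> - {P0}" "x P \<in> P0"
          using prime_prod_in[OF _ fin] pP1 True unfolding pr_def by blast
        then have "x P \<in> \<Union>(\<P> - {P})" using P0 by blast
        then show ?thesis using x P by blast
      next
        case False
        have "pr \<in> P1" unfolding pr_def
          using ideal_prod_in[OF prime_is_ideal[OF pP1] fin, of P1 x] False P1 xin by blast
        moreover have "x P0 = y - pr" unfolding y_def by simp
        ultimately have "x P0 \<in> P1" using ideal_diff[OF prime_is_ideal[OF pP1]] P1 by simp
        then have "x P0 \<in> \<Union>(\<P> - {P0})" using P1 False by blast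
        then show ?thesis using x P0 by blast
      qed
    qed
  qed
qed

lemma zar_int:
  fixes S T :: "'a::comm_ring_1 set"
  shows "{P. prime_ideal P \<and> \<not> S \<subseteq> P} \<inter> {P. prime_ideal P \<and> \<not> T \<subseteq> P} =
    {P. prime_ideal P \<and> \<not> {s * t | s t. s \<in> S \<and> t \<in> T} \<subseteq> P}"
proof (intro set_eqI iffI)
  fix P assume "P \<in> {P. prime_ideal P \<and> \<not> S \<subseteq> P} \<inter> {P. prime_ideal P \<and> \<not> T \<subseteq> P}"
  then obtain s t where st: "prime_ideal P" "s \<in> S" "s \<notin> P" "t \<in> T" "t \<notin> P" by blast
  then have "s * t \<notin> P" using prime_mult by blast
  moreover have "s * t \<in> {s * t | s t. s \<in> S \<and> t \<in> T}" using st by blast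
  ultimately show "P \<in> {P. prime_ideal P \<and> \<not> {s * t | s t. s \<in> S \<and> t \<in> T} \<subseteq> P}" using st by blast
next
  fix P assume "P \<in> {P. prime_ideal P \<and> \<not> {s * t | s t. s \<in> S \<and> t \<in> T} \<subseteq> P}"
  then obtain s t where st: "prime_ideal P" "s \<in> S" "t \<in> T" "s * t \<notin> P" by blast
  have "s \<notin> P" using st ideal_mult_right[OF prime_is_ideal[OF st(1)]] by blast
  moreover have "t \<notin> P" using st ideal_mult_left[OF prime_is_ideal[OF st(1)]] by blast
  ultimately show "P \<in> {P. prime_ideal P \<and> \<not> S \<subseteq> P} \<inter> {P. prime_ideal P \<and> \<not> T \<subseteq> P}" using st by blast
qed

lemma zar_union:
  fixes Sf :: "'b \<Rightarrow> 'a::comm_ring_1 set"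
  shows "(\<Union>K\<in>\<K>. {P. prime_ideal P \<and> \<not> Sf K \<subseteq> P}) = {P. prime_ideal P \<and> \<not> (\<Union>K\<in>\<K>. Sf K) \<subseteq> P}"
  by blast

lemma zariski_istop: "istopology (\<lambda>U. \<exists>S. U = {P. prime_ideal P \<and> \<not> S \<subseteq> (P::'a::comm_ring_1 set)})"
  unfolding istopology_def
proof (intro conjI allI impI)
  fix U V :: "'a set set"
  assume "\<exists>S. U = {P. prime_ideal P \<and> \<not> S \<subseteq> P}" "\<exists>S. V = {P. prime_ideal P \<and> \<not> S \<subseteq> P}"
  then obtain S T where "U = {P. prime_ideal P \<and> \<not> S \<subseteq> P}" "V = {P. prime_ideal P \<and> \<not> T \<subseteq> P}" by blast
  then show "\<exists>S. U \<inter> V = {P. prime_ideal P \<and> \<not> S \<subseteq> P}" using zar_int[of S T] by (simp only:) blast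
next
  fix \<K> :: "'a set set set"
  assume "\<forall>K\<in>\<K>. \<exists>S. K = {P. prime_ideal P \<and> \<not> S \<subseteq> P}"
  then have "\<forall>K\<in>\<K>. \<exists>S. {P. prime_ideal P \<and> \<not> S \<subseteq> P} = K" by metis
  from bchoice[OF this] obtain Sf where Sf: "\<forall>K\<in>\<K>. {P. prime_ideal P \<and> \<not> Sf K \<subseteq> P} = K" by blast
  have "\<Union>\<K> = (\<Union>K\<in>\<K>. {P. prime_ideal P \<and> \<not> Sf K \<subseteq> P})"
    using SUP_cong[OF refl, of \<K> "\<lambda>K. {P. prime_ideal P \<and> \<not> Sf K \<subseteq> P}" "\<lambda>K. K"] Sf by simp
  then show "\<exists>S. \<Union>\<K> = {P. prime_ideal P \<and> \<not> S \<subseteq> P}" unfolding zar_union by blast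
qed

lemma zariski_open: "openin zariski_topology U \<longleftrightarrow> (\<exists>S. U = {P. prime_ideal P \<and> \<not> S \<subseteq> P})"
  unfolding zariski_topology_def by (simp add: topology_inverse'[OF zariski_istop])

lemma open_iff:
  "openin (subtopology zariski_topology A) X \<longleftrightarrow> (\<exists>S. X = {P. prime_ideal P \<and> \<not> S \<subseteq> P} \<inter> A)"
  unfolding openin_subtopology zariski_open by blast

lemma open_of_gen_closed:
  assumes fin: "finite A" and pr: "\<forall>P\<in>A. prime_ideal P" and XA: "X \<subseteq> A"
    and gen: "\<not> (\<exists>P\<in>X. \<exists>P'\<in>A - X. P' \<subseteq> P)"
  shows "openin (subtopology zariski_topology A) X"
  unfolding open_iff
proof (intro exI[of _ "\<Inter>(A - X)"] set_eqI iffI)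
  fix P assume P: "P \<in> X"
  have "\<not> \<Inter>(A - X) \<subseteq> P"
  proof
    assume sub: "\<Inter>(A - X) \<subseteq> P"
    have "\<forall>Q\<in>A - X. \<exists>y. y \<in> Q \<and> y \<notin> P" using gen P by blast
    then obtain y where y: "\<forall>Q\<in>A - X. y Q \<in> Q \<and> y Q \<notin> P" by metis
    have finY: "finite (A - X)" using fin by simp
    have "prod y (A - X) \<in> \<Inter>(A - X)"
    proof
      fix Q assume Q: "Q \<in> A - X"
      show "prod y (A - X) \<in> Q"
        using ideal_prod_in[OF prime_is_ideal finY Q, where f = y] pr Q y by blast
    qed
    moreover have "prod y (A - X) \<notin> P"
      using prime_prod_notin[OF _ finY] P XA pr y by blast
    ultimately show False using sub by blast
  qed
  then show "P \<in> {P. prime_ideal P \<and> \<not> \<Inter>(A - X) \<subseteq> P} \<inter> A" using P XA pr by blast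
next
  fix P assume "P \<in> {P. prime_ideal P \<and> \<not> \<Inter>(A - X) \<subseteq> P} \<inter> A"
  then show "P \<in> X" by blast
qed


theorem theorem2p2:
  fixes sc :: "'a::comm_ring_1 \<Rightarrow> 'm::ab_group_add \<Rightarrow> 'm"
    and M N :: "'m set" and X :: "'a set set"
  assumes "module sc"
    and "noetherian_ring TYPE('a)"
    and "\<exists>F. finite F \<and> M = module.span sc F"
    and "module.subspace sc N"
    and "\<exists>F. finite F \<and> N = module.span sc F"
    and "N \<subset> M"
    and "X \<subseteq> ass sc M N"
  shows "independent_over sc M N X \<longleftrightarrow>
         openin (subtopology zariski_topology (ass sc M N)) X"
proof -
  interpret m: module sc by (rule assms(1))
  note noeth = assms(2)
  obtain F where F: "finite F" "M = m.span F" using assms(3) by blast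
  have sM: "m.subspace M" using F by simp
  have sN: "m.subspace N" and NM: "N \<subseteq> M" using assms(4,6) by auto
  define A where "A = ass sc M N"
  have finA: "finite A" unfolding A_def using m.ass_finite[OF noeth F sN NM] .
  have primeA: "\<forall>P\<in>A. prime_ideal P" unfolding A_def ass_def by blast
  have XA: "X \<subseteq> A" using assms(7) A_def by simp
  have decp: "m.subspace (Q P)" "Q P \<subseteq> M" "ass sc M (Q P) = {P}" "N \<subseteq> Q P"
    if "primary_decomposition sc M N Q" "P \<in> A" for Q P
  proof -
    show "m.subspace (Q P)" "Q P \<subseteq> M" "ass sc M (Q P) = {P}"
      using that unfolding primary_decomposition_def primary_submodule_def A_def by blast+
    have "N = M \<inter> \<Inter>(Q ` A)" using that(1) unfolding primary_decomposition_def A_def by simp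
    then show "N \<subseteq> Q P" using that(2) by blast
  qed
  have decN: "M \<inter> \<Inter>(Q ` A) = N" if "primary_decomposition sc M N Q" for Q
    using that unfolding primary_decomposition_def A_def by simp
  show ?thesis
  proof
    assume indep: "independent_over sc M N X"
    show "openin (subtopology zariski_topology (ass sc M N)) X"
    proof (rule ccontr)
      assume nopen: "\<not> openin (subtopology zariski_topology (ass sc M N)) X"
      then obtain P P' where PP: "P \<in> X" "P' \<in> A - X" "P' \<subseteq> P"
        using open_of_gen_closed[OF finA primeA XA] unfolding A_def by blast
      obtain Q where Q: "primary_decomposition sc M N Q" using m.primdec_exists[OF noeth F sN NM] by blast
      have PA: "P \<in> A" "P' \<in> A" using PP XA by auto
      define T where "T = M \<inter> \<Inter>(Q ` (A - {P'}))"
      have "\<not> T \<subseteq> Q P'"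
      proof
        assume TQ: "T \<subseteq> Q P'"
        have "T \<subseteq> N"
        proof
          fix t assume t: "t \<in> T"
          have "t \<in> M \<inter> \<Inter>(Q ` A)" using t TQ unfolding T_def by blast
          then show "t \<in> N" using decN[OF Q] by simp
        qed
        moreover have "N \<subseteq> T" unfolding T_def using NM decp(4)[OF Q] by blast
        ultimately have "T = N" by blast
        then have "P' \<in> ass sc M T" using PA A_def by simp
        moreover have "ass sc M T \<subseteq> (\<Union>R\<in>A - {P'}. ass sc M (Q R))"
          unfolding T_def using m.ass_Inter[OF sM, of "A - {P'}" Q] finA decp(1)[OF Q] by blast
        moreover have "(\<Union>R\<in>A - {P'}. ass sc M (Q R)) = A - {P'}" using decp(3)[OF Q] by auto
        ultimately show False by blast
      qed
      then obtain y where y: "y \<in> T" "y \<notin> Q P'" by blast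
      have yM: "y \<in> M" using y T_def by blast
      have yP: "{s. sc s y \<in> N} \<subseteq> P"
      proof
        fix s assume "s \<in> {s. sc s y \<in> N}"
        then have "sc s y \<in> Q P'" using decp(4)[OF Q PA(2)] by blast
        then have "s \<in> P'" using m.zero_div[OF noeth decp(3)[OF Q PA(2)] sM decp(1)[OF Q PA(2)] yM y(2)] by blast
        then show "s \<in> P" using PP by blast
      qed
      obtain K where K: "m.subspace K" "N \<subseteq> K" "K \<subseteq> M" "ass sc M K = {P}" "y \<notin> K"
        using m.primary_avoiding[OF noeth F sN NM yM _ yP] primeA PA by blast
      define Q2 where "Q2 = Q(P := Q P \<inter> K)"
      have Q2: "primary_decomposition sc M N Q2"
        unfolding primary_decomposition_def
      proof (intro conjI ballI)
        fix R assume R: "R \<in> ass sc M N"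
        show "primary_submodule sc M R (Q2 R)"
        proof (cases "R = P")
          case False
          then show ?thesis using Q R unfolding Q2_def primary_decomposition_def by simp
        next
          case True
          have s: "m.subspace (Q P \<inter> K)" using decp(1)[OF Q PA(1)] K(1) m.subspace_inter by blast
          have "ass sc M (Q P \<inter> K) \<subseteq> {P}"
            using m.ass_inter[OF decp(1)[OF Q PA(1)] K(1), of M] decp(3)[OF Q PA(1)] K(4) by blast
          moreover have "y \<notin> Q P \<inter> K" using K by blast
          then obtain R' where "R' \<in> ass sc M (Q P \<inter> K)" using m.exists_ass[OF noeth sM s yM] by blast
          ultimately have "ass sc M (Q P \<inter> K) = {P}" by blast
          then show ?thesis using True s decp(2)[OF Q PA(1)] unfolding Q2_def primary_submodule_def by auto
        qed
      next
        show "M \<inter> \<Inter>(Q2 ` ass sc M N) = N"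
        proof
          have "Q2 R \<subseteq> Q R" for R unfolding Q2_def by auto
          then have "M \<inter> \<Inter>(Q2 ` A) \<subseteq> M \<inter> \<Inter>(Q ` A)" by blast
          then show "M \<inter> \<Inter>(Q2 ` ass sc M N) \<subseteq> N" using decN[OF Q] unfolding A_def by blast
          show "N \<subseteq> M \<inter> \<Inter>(Q2 ` ass sc M N)" using NM decp(4)[OF Q] K(2) unfolding Q2_def A_def by auto
        qed
      qed
      have "M \<inter> \<Inter>(Q ` X) = M \<inter> \<Inter>(Q2 ` X)" using indep Q Q2 unfolding independent_over_def by blast
      moreover have "y \<in> M \<inter> \<Inter>(Q ` X)" using y yM PP XA unfolding T_def by blast
      moreover have "y \<notin> M \<inter> \<Inter>(Q2 ` X)" using PP K(5) unfolding Q2_def by auto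
      ultimately show False by blast
    qed
  next
    assume "openin (subtopology zariski_topology (ass sc M N)) X"
    then obtain S where S: "X = {P. prime_ideal P \<and> \<not> S \<subseteq> P} \<inter> A" unfolding open_iff A_def by blast
    define DX where "DX = {x\<in>M. \<exists>s. (\<forall>P\<in>X. s \<notin> P) \<and> sc s x \<in> N}"
    have key: "M \<inter> \<Inter>(Q ` X) = DX" if Q: "primary_decomposition sc M N Q" for Q
    proof
      show "DX \<subseteq> M \<inter> \<Inter>(Q ` X)"
      proof
        fix x assume "x \<in> DX"
        then obtain s where x: "x \<in> M" "\<forall>P\<in>X. s \<notin> P" "sc s x \<in> N" unfolding DX_def by blast
        have "x \<in> Q P" if P: "P \<in> X" for P
        proof (rule ccontr)
          assume "x \<notin> Q P"
          moreover have PA: "P \<in> A" using P XA by blast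
          moreover have "sc s x \<in> Q P" using x decp(4)[OF Q PA] by blast
          ultimately have "s \<in> P"
            using m.zero_div[OF noeth decp(3)[OF Q PA] sM decp(1)[OF Q PA] x(1)] by blast
          then show False using x P by blast
        qed
        then show "x \<in> M \<inter> \<Inter>(Q ` X)" using x by blast
      qed
    next
      show "M \<inter> \<Inter>(Q ` X) \<subseteq> DX"
      proof
        fix x assume x: "x \<in> M \<inter> \<Inter>(Q ` X)"
        have "\<exists>t. (\<forall>P\<in>X. t \<notin> P) \<and> sc t x \<in> Q P'" if P': "P' \<in> A - X" for P'
        proof -
          have pP': "prime_ideal P'" using P' primeA by blast
          then have SP': "S \<subseteq> P'" using P' S by blast
          have "\<exists>s\<in>P'. s \<notin> \<Union>X"
          proof (rule ccontr)
            assume "\<not> (\<exists>s\<in>P'. s \<notin> \<Union>X)"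
            then have "P' \<subseteq> \<Union>X" by blast
            then obtain P where "P \<in> X" "P' \<subseteq> P"
              using prime_avoid[of X P'] finA XA primeA prime_is_ideal[OF pP'] finite_subset by blast
            then show False using SP' S by blast
          qed
          then obtain s where s: "s \<in> P'" "s \<notin> \<Union>X" by blast
          have PA: "P' \<in> A" using P' by blast
          obtain n where "sc (s ^ n) x \<in> Q P'"
            using m.nilp[OF noeth sM decp(1)[OF Q PA] decp(3)[OF Q PA] s(1)] x by blast
          moreover have "\<forall>P\<in>X. s ^ n \<notin> P" using s prime_pow_notin primeA XA by blast
          ultimately show ?thesis by blast
        qed
        then obtain t where t: "\<forall>P'\<in>A - X. (\<forall>P\<in>X. t P' \<notin> P) \<and> sc (t P') x \<in> Q P'" by metis
        define T where "T = prod t (A - X)"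
        have finAX: "finite (A - X)" using finA by simp
        have "\<forall>P\<in>X. T \<notin> P" unfolding T_def using prime_prod_notin[OF _ finAX] t primeA XA by blast
        moreover have "sc T x \<in> N"
        proof -
          have "sc T x \<in> M" using x sM m.subspace_scale by blast
          moreover have "sc T x \<in> Q R" if R: "R \<in> A" for R
          proof (cases "R \<in> X")
            case True
            then show ?thesis using x decp(1)[OF Q R] m.subspace_scale by blast
          next
            case False
            then have RA: "R \<in> A - X" using R by blast
            have "T = t R * prod t (A - X - {R})" unfolding T_def using prod.remove[OF finAX RA] by simp
            then have "sc T x = sc (prod t (A - X - {R})) (sc (t R) x)" by (simp add: m.scale_scale mult.commute)
            then show ?thesis using t RA decp(1)[OF Q R] m.subspace_scale by metis
          qed
          ultimately have "sc T x \<in> M \<inter> \<Inter>(Q ` A)" by blast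
          then show ?thesis using decN[OF Q] by simp
        qed
        ultimately show "x \<in> DX" using x unfolding DX_def by blast
      qed
    qed
    show "independent_over sc M N X" unfolding independent_over_def using key by blast
  qed
qed

end
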